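(* Let $(X,\mathcal{A},\mu)$ be a finite measure space and let $f\in L^1(X)$ be a nonnegative function. Then the set $S_f=\{Sf:\ S\in S\mathcal{D}(L^1(X))\}$ is relatively weakly compact in $L^1(X)$.
   Context: $S\mathcal{D}(L^1(X))$ denotes the set of semi-doubly stochastic operators on $L^1(X)$: positive linear operators $T:L^1(X)\to L^1(X)$ with $\int_X Tf\,d\mu=\int_X f\,d\mu$ for all $f\in L^1(X)$ and $\int_X T^*\chi_E\,d\mu\le\mu(E)$ for every $E\in\mathcal{A}$ with $\mu(E)<\infty$, where $T^*:L^\infty(X)\to L^\infty(X)$ is the Banach adjoint. *)

theory Defs
  imports "HOL-Analysis.Analysis"
begin

text \<open>Elements of L^1(X) are represented by integrable real functions; two
representatives are identified when they agree almost everywhere.  The weak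
topology of L^1 is pulled back to representatives along the quotient map,
i.e. it is the initial topology for the functionals f \<mapsto> \<integral> f g, g \<in> L^\<infinity>.\<close>

definition Linf :: "'a measure \<Rightarrow> ('a \<Rightarrow> real) set" where
  "Linf M = {g \<in> borel_measurable M. \<exists>C. AE x in M. \<bar>g x\<bar> \<le> C}"

definition weak_L1_topology :: "'a measure \<Rightarrow> ('a \<Rightarrow> real) topology" where
  "weak_L1_topology M =
     pullback_topology {f. integrable M f}
       (\<lambda>f. restrict (\<lambda>g. LINT x|M. f x * g x) (Linf M))
       (product_topology (\<lambda>_. euclideanreal) (Linf M))"

definition relatively_compactin :: "'b topology \<Rightarrow> 'b set \<Rightarrow> bool" where
  "relatively_compactin T S \<longleftrightarrow> S \<subseteq> topspace T \<and> compactin T (T closure_of S)"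

definition is_adjoint_image ::
  "'a measure \<Rightarrow> (('a \<Rightarrow> real) \<Rightarrow> ('a \<Rightarrow> real)) \<Rightarrow> ('a \<Rightarrow> real) \<Rightarrow> ('a \<Rightarrow> real) \<Rightarrow> bool" where
  "is_adjoint_image M T g h \<longleftrightarrow> h \<in> Linf M \<and>
     (\<forall>f. integrable M f \<longrightarrow> (LINT x|M. f x * h x) = (LINT x|M. T f x * g x))"

definition semi_doubly_stochastic ::
  "'a measure \<Rightarrow> (('a \<Rightarrow> real) \<Rightarrow> ('a \<Rightarrow> real)) \<Rightarrow> bool" where
  "semi_doubly_stochastic M T \<longleftrightarrow>
     (\<forall>f. integrable M f \<longrightarrow> integrable M (T f)) \<and>
     (\<forall>f g. integrable M f \<longrightarrow> integrable M g \<longrightarrow> (AE x in M. f x = g x) \<longrightarrow>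
            (AE x in M. T f x = T g x)) \<and>
     (\<forall>f g a b. integrable M f \<longrightarrow> integrable M g \<longrightarrow>
            (AE x in M. T (\<lambda>y. a * f y + b * g y) x = a * T f x + b * T g x)) \<and>
     (\<forall>f. integrable M f \<longrightarrow> (AE x in M. 0 \<le> f x) \<longrightarrow> (AE x in M. 0 \<le> T f x)) \<and>
     (\<forall>f. integrable M f \<longrightarrow> (LINT x|M. T f x) = (LINT x|M. f x)) \<and>
     (\<forall>E \<in> sets M. emeasure M E < \<infinity> \<longrightarrow>
        (\<exists>h. is_adjoint_image M T (indicator E) h \<and> (LINT x|M. h x) \<le> measure M E))"

end

theory Submission
  imports Defs
begin


lemma Linf_D: assumes "g \<in> Linf M" shows "g \<in> borel_measurable M" "\<exists>C. AE x in M. \<bar>g x\<bar> \<le> C"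
  using assms by (auto simp: Linf_def)

lemma Linf_lin: assumes "g1 \<in> Linf M" "g2 \<in> Linf M"
  shows "(\<lambda>y. a * g1 y + b * g2 y) \<in> Linf M"
proof -
  obtain C1 where C1: "AE x in M. \<bar>g1 x\<bar> \<le> C1" using assms by (auto simp: Linf_def)
  obtain C2 where C2: "AE x in M. \<bar>g2 x\<bar> \<le> C2" using assms by (auto simp: Linf_def)
  have "AE x in M. \<bar>a * g1 x + b * g2 x\<bar> \<le> \<bar>a\<bar> * C1 + \<bar>b\<bar> * C2"
    using C1 C2
  proof eventually_elim
    case (elim x)
    have "\<bar>a * g1 x + b * g2 x\<bar> \<le> \<bar>a\<bar> * \<bar>g1 x\<bar> + \<bar>b\<bar> * \<bar>g2 x\<bar>"
      by (metis abs_mult abs_triangle_ineq)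
    also have "\<dots> \<le> \<bar>a\<bar> * C1 + \<bar>b\<bar> * C2"
      using elim by (intro add_mono mult_left_mono) auto
    finally show ?case .
  qed
  then show ?thesis using assms by (auto simp: Linf_def)
qed

lemma Linf_indicator: "E \<in> sets M \<Longrightarrow> indicator E \<in> Linf M"
  unfolding Linf_def by (auto intro!: exI[of _ 1] simp: indicator_def)

lemma Linf_zero: "(\<lambda>_. 0) \<in> Linf M"
  unfolding Linf_def by auto

lemma integrable_Linf_mult:
  fixes u :: "'a \<Rightarrow> real"
  assumes u: "integrable M u" and g: "g \<in> Linf M"
  shows "integrable M (\<lambda>x. u x * g x)"
proof -
  obtain C where C: "AE x in M. \<bar>g x\<bar> \<le> C" using g by (auto simp: Linf_def)
  have gm: "g \<in> borel_measurable M" using g by (auto simp: Linf_def)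
  show ?thesis
  proof (rule Bochner_Integration.integrable_bound[where f="\<lambda>x. C * u x"])
    show "integrable M (\<lambda>x. C * u x)" using u by auto
    show "(\<lambda>x. u x * g x) \<in> borel_measurable M" using u gm by measurable
    show "AE x in M. norm (u x * g x) \<le> norm (C * u x)"
      using C by eventually_elim (auto simp: abs_mult mult.commute intro!: mult_right_mono)
  qed
qed

lemma integral_Linf_bound:
  fixes u :: "'a \<Rightarrow> real"
  assumes u: "integrable M u" and g: "g \<in> borel_measurable M" and C: "AE x in M. \<bar>g x\<bar> \<le> C"
  shows "\<bar>LINT x|M. u x * g x\<bar> \<le> C * (LINT x|M. \<bar>u x\<bar>)"
proof -
  have gL: "g \<in> Linf M" using g C by (auto simp: Linf_def)
  have i: "integrable M (\<lambda>x. u x * g x)" by (rule integrable_Linf_mult[OF u gL])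
  have "\<bar>LINT x|M. u x * g x\<bar> \<le> (LINT x|M. \<bar>u x * g x\<bar>)"
    by (rule integral_abs_bound)
  also have "\<dots> \<le> (LINT x|M. C * \<bar>u x\<bar>)"
    using C integrable_abs[OF i] u by (intro integral_mono_AE) (auto elim!: eventually_mono simp: abs_mult mult.commute intro!: mult_right_mono)
  also have "\<dots> = C * (LINT x|M. \<bar>u x\<bar>)" by simp
  finally show ?thesis .
qed



lemma compactin_pullback_I:
  assumes B: "B \<subseteq> A" "P ` B \<subseteq> topspace Y" and K: "compactin Y (P ` B)"
  shows "compactin (pullback_topology A P Y) B"
  unfolding compactin_def
proof (intro conjI allI impI)
  show "B \<subseteq> topspace (pullback_topology A P Y)"
    using B by (auto simp: topspace_pullback_topology)
  fix \<U> assume H: "(\<forall>U\<in>\<U>. openin (pullback_topology A P Y) U) \<and> B \<subseteq> \<Union>\<U>"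
  then have "\<forall>U\<in>\<U>. \<exists>W. openin Y W \<and> U = P -` W \<inter> A"
    by (auto simp: openin_pullback_topology)
  then obtain W where W: "\<And>U. U \<in> \<U> \<Longrightarrow> openin Y (W U) \<and> U = P -` W U \<inter> A"
    by metis
  have "P ` B \<subseteq> \<Union>(W ` \<U>)"
  proof
    fix y assume "y \<in> P ` B"
    then obtain x where x: "x \<in> B" "y = P x" by auto
    then obtain U where "U \<in> \<U>" "x \<in> U" using H by auto
    then show "y \<in> \<Union>(W ` \<U>)" using W[of U] x by auto
  qed
  then obtain \<G> where G: "finite \<G>" "\<G> \<subseteq> W ` \<U>" "P ` B \<subseteq> \<Union>\<G>"
    using K W unfolding compactin_def by (metis (no_types, lifting) imageE)
  then obtain \<F> where F: "\<F> \<subseteq> \<U>" "finite \<F>" "\<G> = W ` \<F>"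
    by (meson finite_subset_image)
  show "\<exists>\<F>. finite \<F> \<and> \<F> \<subseteq> \<U> \<and> B \<subseteq> \<Union>\<F>"
  proof (intro exI conjI)
    show "finite \<F>" "\<F> \<subseteq> \<U>" using F by auto
    show "B \<subseteq> \<Union>\<F>"
    proof
      fix x assume x: "x \<in> B"
      then obtain U where "U \<in> \<F>" "P x \<in> W U" using G F by auto
      then show "x \<in> \<Union>\<F>" using W[of U] F x B by auto
    qed
  qed
qed

lemma relcompact_pullback:
  assumes "compactin Y K" "\<Phi> \<subseteq> K" "closedin Y \<Phi>" "P ` S \<subseteq> \<Phi>" "\<Phi> \<subseteq> P ` A" "S \<subseteq> A"
    "P ` A \<subseteq> topspace Y"
  shows "relatively_compactin (pullback_topology A P Y) S"
proof -
  let ?X = "pullback_topology A P Y"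
  define C where "C = P -` \<Phi> \<inter> A"
  have tX: "topspace ?X = A" using assms by (auto simp: topspace_pullback_topology)
  have "topspace ?X - C = P -` (topspace Y - \<Phi>) \<inter> A"
    using tX assms(7) unfolding C_def by auto
  moreover have "openin Y (topspace Y - \<Phi>)" using assms(3) by auto
  ultimately have "openin ?X (topspace ?X - C)"
    unfolding openin_pullback_topology by blast
  then have cC: "closedin ?X C" unfolding closedin_def C_def tX by auto
  have SC: "S \<subseteq> C" using assms unfolding C_def by auto
  have cl: "?X closure_of S \<subseteq> C" using closure_of_minimal[OF SC cC] .
  have PC: "P ` C = \<Phi>" using assms(5) unfolding C_def by auto
  have "compactin Y \<Phi>" using closed_compactin assms(1-3) by blast
  then have "compactin ?X C"
    by (intro compactin_pullback_I) (use PC assms(3) closedin_subset in \<open>auto simp: C_def\<close>)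
  then have "compactin ?X (?X closure_of S)"
    using closed_compactin cl closedin_closure_of by blast
  then show ?thesis unfolding relatively_compactin_def using tX assms(6) by auto
qed

lemma closedin_all:
  assumes "\<And>i. i \<in> I \<Longrightarrow> closedin Y {x \<in> topspace Y. Q i x}"
  shows "closedin Y {x \<in> topspace Y. \<forall>i\<in>I. Q i x}"
proof (cases "I = {}")
  case True then show ?thesis by simp
next
  case False
  have "{x \<in> topspace Y. \<forall>i\<in>I. Q i x} = \<Inter>((\<lambda>i. {x \<in> topspace Y. Q i x}) ` I)"
    using False by auto
  also have "closedin Y \<dots>" using False assms by (intro closedin_Inter) auto
  finally show ?thesis .
qed

lemma closedin_le:
  assumes "continuous_map Y euclideanreal h1" "continuous_map Y euclideanreal h2"
  shows "closedin Y {x \<in> topspace Y. h1 x \<le> h2 x}"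
proof -
  have "continuous_map Y euclideanreal (\<lambda>x. h2 x - h1 x)"
    using assms by (intro continuous_intros)
  from closedin_continuous_map_preimage[OF this, of "{0..}"]
  show ?thesis by simp
qed

lemma closedin_eq:
  assumes "continuous_map Y euclideanreal h1" "continuous_map Y euclideanreal h2"
  shows "closedin Y {x \<in> topspace Y. h1 x = h2 x}"
proof -
  have "{x \<in> topspace Y. h1 x = h2 x} = {x \<in> topspace Y. h1 x \<le> h2 x} \<inter> {x \<in> topspace Y. h2 x \<le> h1 x}"
    by auto
  then show ?thesis using closedin_le[OF assms] closedin_le[OF assms(2,1)] by auto
qed

lemma closedin_imp:
  assumes "R \<Longrightarrow> closedin Y {x \<in> topspace Y. Q x}"
  shows "closedin Y {x \<in> topspace Y. R \<longrightarrow> Q x}"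
  using assms by (cases R) auto



lemma fm_int_ind: "finite_measure M \<Longrightarrow> A \<in> sets M \<Longrightarrow> integrable M (indicator A :: 'a \<Rightarrow> real)"
  by (simp add: finite_measure.emeasure_finite integrable_indicator_iff less_top[symmetric])

lemma adj_nonneg:
  assumes fm: "finite_measure M" and T: "semi_doubly_stochastic M T"
    and h: "is_adjoint_image M T (indicator E) h" and E: "E \<in> sets M"
  shows "AE x in M. 0 \<le> h x"
proof -
  have hL: "h \<in> Linf M" and hadj: "\<And>f. integrable M f \<Longrightarrow> (LINT x|M. f x * h x) = (LINT x|M. T f x * indicator E x)"
    using h by (auto simp: is_adjoint_image_def)
  have hm: "h \<in> borel_measurable M" using hL by (auto simp: Linf_def)
  define A where "A = {x \<in> space M. h x < 0}"
  have A: "A \<in> sets M" unfolding A_def using hm by measurable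
  have iA: "integrable M (indicator A :: 'a \<Rightarrow> real)" using fm A by (rule fm_int_ind)
  have Tpos: "AE x in M. 0 \<le> T (indicator A) x"
    using T iA by (auto simp: semi_doubly_stochastic_def)
  have Ti: "integrable M (T (indicator A))" using T iA by (auto simp: semi_doubly_stochastic_def)
  have "0 \<le> (LINT x|M. T (indicator A) x * indicator E x)"
    using Tpos by (intro integral_nonneg_AE) (auto elim!: eventually_mono simp: indicator_def)
  also have "\<dots> = (LINT x|M. indicator A x * h x)" using hadj[OF iA] by simp
  finally have i0: "0 \<le> (LINT x|M. indicator A x * h x)" .
  have iAh: "integrable M (\<lambda>x. indicator A x * h x)" by (rule integrable_Linf_mult[OF iA hL])
  have "(LINT x|M. indicator A x * (- h x)) = 0"
  proof (rule antisym)
    show "(LINT x|M. indicator A x * (- h x)) \<le> 0" using i0 by simp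
    show "0 \<le> (LINT x|M. indicator A x * (- h x))"
      by (intro integral_nonneg_AE) (auto simp: A_def indicator_def)
  qed
  then have "AE x in M. indicator A x * (- h x) = 0"
    using iAh by (subst (asm) integral_nonneg_eq_0_iff_AE) (auto simp: A_def indicator_def)
  then show ?thesis using AE_space by eventually_elim (auto simp: A_def indicator_def split: if_splits)
qed

lemma sds_props:
  assumes fm: "finite_measure M" and f: "integrable M f" and fpos: "AE x in M. 0 \<le> f x"
    and T: "semi_doubly_stochastic M T"
  shows "integrable M (T f)" "AE x in M. 0 \<le> T f x" "(LINT x|M. T f x) = (LINT x|M. f x)"
    "\<And>E N. E \<in> sets M \<Longrightarrow> 0 \<le> N \<Longrightarrow> (LINT x|M. T f x * indicator E x) \<le>
        (LINT y|M. f y * indicator {x\<in>space M. N < f x} y) + N * measure M E"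
proof -
  note Tdef = T[unfolded semi_doubly_stochastic_def]
  show Tfi: "integrable M (T f)" using Tdef f by auto
  show "AE x in M. 0 \<le> T f x" using Tdef f fpos by auto
  show "(LINT x|M. T f x) = (LINT x|M. f x)" using Tdef f by auto
  fix E N assume E: "E \<in> sets M" and N: "0 \<le> (N::real)"
  have fm_[measurable]: "f \<in> borel_measurable M" using f by auto
  define B where "B = {x\<in>space M. N < f x}"
  have B[measurable]: "B \<in> sets M" unfolding B_def by measurable
  define f1 where "f1 = (\<lambda>y. f y * indicator B y)"
  define f2 where "f2 = (\<lambda>y. f y - f1 y)"
  have f1i: "integrable M f1" unfolding f1_def using f by (intro integrable_real_mult_indicator) auto
  have f2i: "integrable M f2" unfolding f2_def using f f1i by auto
  have fsum: "f = (\<lambda>y. 1 * f1 y + 1 * f2 y)"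
    by (auto simp: f1_def f2_def indicator_def fun_eq_iff)
  have lin: "AE x in M. T f x = 1 * T f1 x + 1 * T f2 x"
    using Tdef f1i f2i by (subst fsum) blast
  have f1pos: "AE x in M. 0 \<le> f1 x" using fpos by eventually_elim (auto simp: f1_def indicator_def)
  have f2pos: "AE x in M. 0 \<le> f2 x" using fpos by eventually_elim (auto simp: f2_def f1_def indicator_def)
  have T1i: "integrable M (T f1)" and T2i: "integrable M (T f2)" using Tdef f1i f2i by auto
  have T1pos: "AE x in M. 0 \<le> T f1 x" using Tdef f1i f1pos by auto
  obtain h where h: "is_adjoint_image M T (indicator E) h" and hint: "(LINT x|M. h x) \<le> measure M E"
    using Tdef E finite_measure.emeasure_finite[OF fm, of E] by (auto simp: top.not_eq_extremum)
  have hL: "h \<in> Linf M" and hadj: "\<And>f. integrable M f \<Longrightarrow> (LINT x|M. f x * h x) = (LINT x|M. T f x * indicator E x)"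
    using h by (auto simp: is_adjoint_image_def)
  have hpos: "AE x in M. 0 \<le> h x" by (rule adj_nonneg[OF fm T h E])
  have hi: "integrable M h"
  proof -
    have "integrable M (\<lambda>x. indicator (space M) x * h x)"
      by (rule integrable_Linf_mult[OF fm_int_ind[OF fm sets.top] hL])
    moreover have "integrable M (\<lambda>x. indicator (space M) x * h x) = integrable M h"
      by (rule Bochner_Integration.integrable_cong) (auto simp: indicator_def)
    ultimately show ?thesis by simp
  qed
  have EL: "indicator E \<in> Linf M" using E by (rule Linf_indicator)
  have "(LINT x|M. T f x * indicator E x) = (LINT x|M. T f1 x * indicator E x + T f2 x * indicator E x)"
  proof (rule integral_cong_AE)
    show "(\<lambda>x. T f x * indicator E x) \<in> borel_measurable M"
      using integrable_Linf_mult[OF Tfi EL] by auto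
    show "(\<lambda>x. T f1 x * indicator E x + T f2 x * indicator E x) \<in> borel_measurable M"
      using Bochner_Integration.integrable_add[OF integrable_Linf_mult[OF T1i EL] integrable_Linf_mult[OF T2i EL]] by auto
    show "AE x in M. T f x * indicator E x = T f1 x * indicator E x + T f2 x * indicator E x"
      using lin by eventually_elim (simp add: algebra_simps)
  qed
  also have "\<dots> = (LINT x|M. T f1 x * indicator E x) + (LINT x|M. T f2 x * indicator E x)"
    using integrable_Linf_mult[OF T1i EL] integrable_Linf_mult[OF T2i EL] by (rule Bochner_Integration.integral_add)
  also have "(LINT x|M. T f1 x * indicator E x) \<le> (LINT x|M. T f1 x)"
    using T1pos integrable_Linf_mult[OF T1i EL] T1i
    by (intro integral_mono_AE) (auto elim!: eventually_mono simp: indicator_def)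
  also have "(LINT x|M. T f1 x) = (LINT x|M. f1 x)" using Tdef f1i by auto
  also have "(LINT x|M. T f2 x * indicator E x) = (LINT x|M. f2 x * h x)" using hadj[OF f2i] by simp
  also have "\<dots> \<le> (LINT x|M. N * h x)"
    using hpos integrable_Linf_mult[OF f2i hL] hi AE_space N
    by (intro integral_mono_AE) (auto elim!: eventually_mono simp: f2_def f1_def B_def indicator_def
        intro!: mult_right_mono)
  also have "\<dots> = N * (LINT x|M. h x)" by simp
  also have "\<dots> \<le> N * measure M E" using hint N by (intro mult_left_mono)
  finally show "(LINT x|M. T f x * indicator E x) \<le>
        (LINT y|M. f y * indicator {x\<in>space M. N < f x} y) + N * measure M E"
    by (simp add: f1_def B_def)
qed



locale lfun =
  fixes M :: "'a measure" and D :: "('a \<Rightarrow> real) \<Rightarrow> real" and J :: real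
  assumes bound: "\<And>g C. g \<in> Linf M \<Longrightarrow> (AE x in M. \<bar>g x\<bar> \<le> C) \<Longrightarrow> \<bar>D g\<bar> \<le> C * J"
    and lin: "\<And>g1 g2 a b. g1 \<in> Linf M \<Longrightarrow> g2 \<in> Linf M \<Longrightarrow> D (\<lambda>y. a * g1 y + b * g2 y) = a * D g1 + b * D g2"
    and aeq: "\<And>g1 g2. g1 \<in> Linf M \<Longrightarrow> g2 \<in> Linf M \<Longrightarrow> (AE x in M. g1 x = g2 x) \<Longrightarrow> D g1 = D g2"
    and ind: "\<And>E. E \<in> sets M \<Longrightarrow> D (indicator E) = 0"
begin

lemma zero: "D (\<lambda>_. 0) = 0"
  using lin[OF Linf_zero Linf_zero, of 0 0] by simp

lemma sumlin:
  assumes "finite K" "\<And>k. k \<in> K \<Longrightarrow> h k \<in> Linf M"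
  shows "(\<lambda>x. \<Sum>k\<in>K. c k * h k x) \<in> Linf M \<and> D (\<lambda>x. \<Sum>k\<in>K. c k * h k x) = (\<Sum>k\<in>K. c k * D (h k))"
  using assms
proof (induction K rule: finite_induct)
  case empty
  then show ?case using zero Linf_zero by simp
next
  case (insert k K)
  then have IH: "(\<lambda>x. \<Sum>k\<in>K. c k * h k x) \<in> Linf M" "D (\<lambda>x. \<Sum>k\<in>K. c k * h k x) = (\<Sum>k\<in>K. c k * D (h k))"
    and hk: "h k \<in> Linf M" by auto
  have eq: "(\<lambda>x. \<Sum>k\<in>insert k K. c k * h k x) = (\<lambda>y. c k * h k y + 1 * (\<Sum>k\<in>K. c k * h k y))"
    using insert by auto
  show ?case unfolding eq using Linf_lin[OF hk IH(1), of "c k" 1] lin[OF hk IH(1), of "c k" 1] IH(2) insert by simp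
qed

lemma vanish:
  assumes g: "g \<in> Linf M"
  shows "D g = 0"
proof -
  obtain C0 where C0: "AE x in M. \<bar>g x\<bar> \<le> C0" using g by (auto simp: Linf_def)
  define C where "C = \<bar>C0\<bar>"
  have C: "AE x in M. \<bar>g x\<bar> \<le> C" "0 \<le> C" using C0 unfolding C_def by (auto elim!: eventually_mono)
  have gm[measurable]: "g \<in> borel_measurable M" using g by (auto simp: Linf_def)
  define g' where "g' = (\<lambda>x. if \<bar>g x\<bar> \<le> C then g x else 0)"
  have g'm[measurable]: "g' \<in> borel_measurable M" unfolding g'_def by measurable
  have g'b: "\<And>x. \<bar>g' x\<bar> \<le> C" using C unfolding g'_def by auto
  have g'L: "g' \<in> Linf M" using g'm g'b by (auto simp: Linf_def)
  have "D g = D g'" using C(1) by (intro aeq g g'L) (auto elim!: eventually_mono simp: g'_def)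
  have small: "\<bar>D g'\<bar> \<le> J / real n" if n: "n > 0" for n :: nat
  proof -
    define m where "m = \<lceil>real n * C\<rceil>"
    define K where "K = {-m..m}"
    define A where "A = (\<lambda>k::int. {x \<in> space M. \<lfloor>real n * g' x\<rfloor> = k})"
    have A[measurable]: "\<And>k. A k \<in> sets M" unfolding A_def by measurable
    define s where "s = (\<lambda>x. \<Sum>k\<in>K. (real_of_int k / real n) * indicator (A k) x)"
    have sl: "s \<in> Linf M \<and> D s = (\<Sum>k\<in>K. (real_of_int k / real n) * D (indicator (A k)))"
      unfolding s_def by (rule sumlin) (auto simp: K_def Linf_indicator)
    then have sL: "s \<in> Linf M" and Ds: "D s = 0" using ind by auto
    have sx: "s x = real_of_int \<lfloor>real n * g' x\<rfloor> / real n" if x: "x \<in> space M" for x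
    proof -
      let ?F = "\<lfloor>real n * g' x\<rfloor>"
      have "real n * g' x \<le> real n * C" using g'b[of x] by (intro mult_left_mono) auto
      then have "?F \<le> m" unfolding m_def by (meson floor_le_ceiling floor_mono order_trans)
      have "- C \<le> g' x" using g'b[of x] by (simp add: abs_le_iff)
      then have "real n * (- C) \<le> real n * g' x" by (intro mult_left_mono) auto
      then have "- (real n * C) \<le> real n * g' x" by simp
      then have "\<lfloor>- (real n * C)\<rfloor> \<le> ?F" by (rule floor_mono)
      then have "- m \<le> ?F" unfolding m_def by (simp add: floor_minus)
      have FK: "?F \<in> K" unfolding K_def using \<open>?F \<le> m\<close> \<open>- m \<le> ?F\<close> by auto
      have "s x = (\<Sum>k\<in>K. if k = ?F then real_of_int k / real n else 0)"
        unfolding s_def by (intro sum.cong) (auto simp: A_def indicator_def x)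
      also have "\<dots> = real_of_int ?F / real n" using FK by (simp add: sum.delta' K_def)
      finally show ?thesis .
    qed
    define r where "r = (\<lambda>y. 1 * g' y + (-1) * s y)"
    have rL: "r \<in> Linf M" unfolding r_def by (rule Linf_lin[OF g'L sL])
    have rb: "AE x in M. \<bar>r x\<bar> \<le> 1 / real n"
    proof (rule AE_I2)
      fix x assume x: "x \<in> space M"
      have "real_of_int \<lfloor>real n * g' x\<rfloor> \<le> real n * g' x" by (rule of_int_floor_le)
      moreover have "real n * g' x < real_of_int \<lfloor>real n * g' x\<rfloor> + 1" by (rule real_of_int_floor_add_one_gt)
      ultimately have "0 \<le> real n * g' x - real_of_int \<lfloor>real n * g' x\<rfloor>"
        "real n * g' x - real_of_int \<lfloor>real n * g' x\<rfloor> \<le> 1" by linarith+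
      moreover have "r x = (real n * g' x - real_of_int \<lfloor>real n * g' x\<rfloor>) / real n"
        unfolding r_def sx[OF x] using n by (simp add: field_simps)
      ultimately show "\<bar>r x\<bar> \<le> 1 / real n" using n by (simp add: divide_right_mono)
    qed
    have "g' = (\<lambda>y. 1 * s y + 1 * r y)" by (auto simp: r_def fun_eq_iff)
    then have "D g' = 1 * D s + 1 * D r" using lin[OF sL rL, of 1 1] by simp
    then have "D g' = D r" using Ds by simp
    also have "\<bar>D r\<bar> \<le> 1 / real n * J" by (rule bound[OF rL rb])
    finally show ?thesis by simp
  qed
  have "D g' = 0"
  proof (rule ccontr)
    assume ne: "D g' \<noteq> 0"
    obtain n :: nat where nn: "J / \<bar>D g'\<bar> < real n" using reals_Archimedean2 by blast
    have "0 \<le> \<bar>D g'\<bar>" by simp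
    have "\<bar>D g'\<bar> \<le> J / real (1::nat)" by (rule small) simp
    then have J0: "0 \<le> J" by simp
    have n0: "n > 0" using nn J0 ne by (metis divide_nonneg_nonneg abs_ge_zero linorder_not_le of_nat_0 gr0I)
    have "\<bar>D g'\<bar> \<le> J / real n" using small[OF n0] .
    moreover have "J / real n < \<bar>D g'\<bar>" using nn ne n0 by (simp add: field_simps)
    ultimately show False by simp
  qed
  then show ?thesis using \<open>D g = D g'\<close> by simp
qed

end



lemma tail_tendsto:
  fixes f :: "'a \<Rightarrow> real"
  assumes f: "integrable M f"
  shows "(\<lambda>n::nat. LINT y|M. f y * indicator {x\<in>space M. real n < f x} y) \<longlonglongrightarrow> 0"
proof -
  have fm[measurable]: "f \<in> borel_measurable M" using f by auto
  have "(\<lambda>n::nat. LINT y|M. f y * indicator {x\<in>space M. real n < f x} y) \<longlonglongrightarrow> (LINT y|M. (\<lambda>_. 0::real) y)"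
  proof (rule integral_dominated_convergence[where w="\<lambda>x. \<bar>f x\<bar>"])
    show "(\<lambda>_. 0::real) \<in> borel_measurable M" by simp
    show "\<And>n::nat. (\<lambda>y. f y * indicator {x\<in>space M. real n < f x} y) \<in> borel_measurable M" by measurable
    show "integrable M (\<lambda>x. \<bar>f x\<bar>)" using f by auto
    show "\<And>n::nat. AE x in M. norm (f x * indicator {x\<in>space M. real n < f x} x) \<le> \<bar>f x\<bar>"
      by (auto simp: indicator_def)
    show "AE x in M. (\<lambda>n::nat. f x * indicator {x\<in>space M. real n < f x} x) \<longlonglongrightarrow> 0"
    proof (rule AE_I2)
      fix x assume x: "x \<in> space M"
      obtain n0 :: nat where n0: "f x < real n0" using reals_Archimedean2 by blast
      have "eventually (\<lambda>n::nat. f x * indicator {x\<in>space M. real n < f x} x = 0) sequentially"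
        unfolding eventually_sequentially
        by (rule exI[of _ n0]) (use n0 in \<open>auto simp: indicator_def\<close>)
      then show "(\<lambda>n::nat. f x * indicator {x\<in>space M. real n < f x} x) \<longlonglongrightarrow> 0"
        by (rule tendsto_eventually)
    qed
  qed
  then show ?thesis by simp
qed

lemma construct:
  fixes \<phi> :: "('a \<Rightarrow> real) \<Rightarrow> real" and f :: "'a \<Rightarrow> real"
  assumes fm: "finite_measure M" and f: "integrable M f"
    and ind: "\<And>E N. E \<in> sets M \<Longrightarrow> 0 \<le> N \<Longrightarrow> 0 \<le> \<phi> (indicator E) \<and>
        \<phi> (indicator E) \<le> (LINT y|M. f y * indicator {x\<in>space M. N < f x} y) + N * measure M E"
    and add: "\<And>A B. A \<in> sets M \<Longrightarrow> B \<in> sets M \<Longrightarrow> A \<inter> B = {} \<Longrightarrow>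
        \<phi> (indicator (A \<union> B)) = \<phi> (indicator A) + \<phi> (indicator B)"
    and nul: "\<And>E. E \<in> null_sets M \<Longrightarrow> \<phi> (indicator E) = 0"
  shows "\<exists>u. integrable M u \<and> (\<forall>E\<in>sets M. \<phi> (indicator E) = (LINT x|M. u x * indicator E x))"
proof -
  interpret finite_measure M by fact
  define \<nu> where "\<nu> = (\<lambda>E. ennreal (\<phi> (indicator E)))"
  have pos: "positive (sets M) \<nu>"
    unfolding positive_def \<nu>_def using nul[of "{}"] by auto
  have addv: "additive (sets M) \<nu>"
  proof (unfold additive_def, intro ballI impI)
    fix A B assume AB: "A \<in> sets M" "B \<in> sets M" "A \<inter> B = {}"
    have "0 \<le> \<phi> (indicator A)" "0 \<le> \<phi> (indicator B)" using ind[of A 0] ind[of B 0] AB by auto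
    then show "\<nu> (A \<union> B) = \<nu> A + \<nu> B" using add[OF AB] by (simp add: \<nu>_def ennreal_plus)
  qed
  have cont: "(\<lambda>i. \<nu> (A i)) \<longlonglongrightarrow> 0" if A: "range A \<subseteq> sets M" "decseq A" "(\<Inter>i. A i) = {}" for A
  proof -
    have mA: "(\<lambda>i. measure M (A i)) \<longlonglongrightarrow> 0"
      using finite_Lim_measure_decseq[OF A(1,2)] A(3) by simp
    have "(\<lambda>i. \<phi> (indicator (A i))) \<longlonglongrightarrow> 0"
    proof (rule LIMSEQ_I)
      fix r :: real assume r: "0 < r"
      obtain n0 where n0: "\<And>n. n \<ge> n0 \<Longrightarrow> norm ((LINT y|M. f y * indicator {x\<in>space M. real n < f x} y) - 0) < r / 2"
        using LIMSEQ_D[OF tail_tendsto[OF f], of "r/2"] r by auto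
      define N where "N = real n0"
      have N0: "0 \<le> N" unfolding N_def by simp
      obtain i0 where i0: "\<And>i. i \<ge> i0 \<Longrightarrow> norm (measure M (A i) - 0) < r / (2 * (N + 1))"
        using LIMSEQ_D[OF mA, of "r / (2 * (N+1))"] r N0 by auto
      show "\<exists>no. \<forall>n\<ge>no. norm (\<phi> (indicator (A n)) - 0) < r"
      proof (intro exI allI impI)
        fix i assume i: "i \<ge> i0"
        have Ai: "A i \<in> sets M" using A by auto
        have b: "0 \<le> \<phi> (indicator (A i))" "\<phi> (indicator (A i)) \<le> (LINT y|M. f y * indicator {x\<in>space M. N < f x} y) + N * measure M (A i)"
          using ind[OF Ai N0] by auto
        have t: "(LINT y|M. f y * indicator {x\<in>space M. N < f x} y) < r / 2"
          using n0[of n0] unfolding N_def by simp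
        have m: "measure M (A i) < r / (2 * (N + 1))" using i0[OF i] by simp
        have "N * measure M (A i) \<le> N * (r / (2 * (N + 1)))"
          using m N0 by (intro mult_left_mono) auto
        also have "\<dots> < r / 2" using N0 r by (simp add: field_simps)
        finally show "norm (\<phi> (indicator (A i)) - 0) < r" using b t by simp
      qed
    qed
    then have "(\<lambda>i. ennreal (\<phi> (indicator (A i)))) \<longlonglongrightarrow> ennreal 0" by (rule tendsto_ennrealI)
    then show ?thesis unfolding \<nu>_def by simp
  qed
  have ca: "countably_additive (sets M) \<nu>"
  proof (rule sets.empty_continuous_imp_countably_additive[OF pos addv])
    show "\<forall>A\<in>sets M. \<nu> A \<noteq> \<infinity>" by (simp add: \<nu>_def)
    fix A :: "nat \<Rightarrow> 'a set" assume "range A \<subseteq> sets M" "decseq A" "(\<Inter>i. A i) = {}"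
    then show "(\<lambda>i. \<nu> (A i)) \<longlonglongrightarrow> 0" by (rule cont)
  qed
  define N where "N = measure_of (space M) (sets M) \<nu>"
  have eN: "\<And>E. E \<in> sets M \<Longrightarrow> emeasure N E = \<nu> E"
    unfolding N_def by (rule emeasure_measure_of_sigma[OF sets.sigma_algebra_axioms pos ca])
  have sN: "sets N = sets M" unfolding N_def by simp
  have ac: "absolutely_continuous M N"
    unfolding absolutely_continuous_def
  proof
    fix E assume E: "E \<in> null_sets M"
    then have "E \<in> sets M" by auto
    then show "E \<in> null_sets N" using E eN sN nul by (auto simp: \<nu>_def null_sets_def)
  qed
  obtain w where wm[measurable]: "w \<in> borel_measurable M" and dw: "density M w = N"
    using Radon_Nikodym[OF ac sN] by auto
  have wE: "(\<integral>\<^sup>+ x. w x * indicator E x \<partial>M) = ennreal (\<phi> (indicator E))" if E: "E \<in> sets M" for E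
    using emeasure_density[OF wm E] dw eN[OF E] by (simp add: \<nu>_def)
  have "(\<integral>\<^sup>+ x. w x \<partial>M) = (\<integral>\<^sup>+ x. w x * indicator (space M) x \<partial>M)"
    by (intro nn_integral_cong) (auto simp: indicator_def)
  also have "\<dots> = ennreal (\<phi> (indicator (space M)))" by (rule wE) simp
  finally have wfin: "(\<integral>\<^sup>+ x. w x \<partial>M) = ennreal (\<phi> (indicator (space M)))" .
  have wAE: "AE x in M. w x \<noteq> \<infinity>" by (rule nn_integral_PInf_AE) (use wfin in auto)
  define u where "u = (\<lambda>x. enn2real (w x))"
  have um[measurable]: "u \<in> borel_measurable M" unfolding u_def by measurable
  have uw: "AE x in M. ennreal (u x) = w x" using wAE
    by eventually_elim (auto simp: u_def less_top)
  have uE: "(\<integral>\<^sup>+ x. ennreal (u x * indicator E x) \<partial>M) = ennreal (\<phi> (indicator E))" if E: "E \<in> sets M" for E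
  proof -
    have "(\<integral>\<^sup>+ x. ennreal (u x * indicator E x) \<partial>M) = (\<integral>\<^sup>+ x. w x * indicator E x \<partial>M)"
      using uw by (intro nn_integral_cong_AE) (auto elim!: eventually_mono simp: indicator_def)
    then show ?thesis using wE[OF E] by simp
  qed
  have ui: "integrable M u"
  proof (rule integrableI_nn_integral_finite)
    show "AE x in M. 0 \<le> u x" by (simp add: u_def)
    have "(\<integral>\<^sup>+ x. ennreal (u x) \<partial>M) = (\<integral>\<^sup>+ x. ennreal (u x * indicator (space M) x) \<partial>M)"
      by (intro nn_integral_cong) (auto simp: indicator_def)
    also have "\<dots> = ennreal (\<phi> (indicator (space M)))" by (rule uE) simp
    finally show "(\<integral>\<^sup>+ x. ennreal (u x) \<partial>M) = ennreal (\<phi> (indicator (space M)))" .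
  qed (simp)
  show ?thesis
  proof (intro exI conjI ballI)
    show "integrable M u" by fact
    fix E assume E: "E \<in> sets M"
    have "(LINT x|M. u x * indicator E x) = enn2real (\<integral>\<^sup>+ x. ennreal (u x * indicator E x) \<partial>M)"
    proof (rule integral_eq_nn_integral)
      show "(\<lambda>x. u x * indicator E x) \<in> borel_measurable M" using E by measurable
      show "AE x in M. 0 \<le> u x * indicator E x" by (simp add: u_def indicator_def)
    qed
    also have "\<dots> = \<phi> (indicator E)"
    proof -
      have "0 \<le> \<phi> (indicator E)" using ind[of E 0] E by auto
      then show ?thesis using uE[OF E] by simp
    qed
    finally show "\<phi> (indicator E) = (LINT x|M. u x * indicator E x)" by simp
  qed
qed



lemma closedin_all':
  assumes "\<And>i. closedin Y {x \<in> topspace Y. Q i x}"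
  shows "closedin Y {x \<in> topspace Y. \<forall>i. Q i x}"
  using closedin_all[of UNIV Y Q] assms by simp

lemma closedin_conj:
  assumes "closedin Y {x \<in> topspace Y. P x}" "closedin Y {x \<in> topspace Y. Q x}"
  shows "closedin Y {x \<in> topspace Y. P x \<and> Q x}"
proof -
  have "{x \<in> topspace Y. P x \<and> Q x} = {x \<in> topspace Y. P x} \<inter> {x \<in> topspace Y. Q x}" by auto
  then show ?thesis using assms by auto
qed

lemma Pu_props:
  fixes u :: "'a \<Rightarrow> real"
  assumes u: "integrable M u"
  shows "\<And>g C. g \<in> Linf M \<Longrightarrow> (AE x in M. \<bar>g x\<bar> \<le> C) \<Longrightarrow> \<bar>LINT x|M. u x * g x\<bar> \<le> C * (LINT x|M. \<bar>u x\<bar>)"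
    and "\<And>g1 g2 a b. g1 \<in> Linf M \<Longrightarrow> g2 \<in> Linf M \<Longrightarrow>
      (LINT x|M. u x * (a * g1 x + b * g2 x)) = a * (LINT x|M. u x * g1 x) + b * (LINT x|M. u x * g2 x)"
    and "\<And>g1 g2. g1 \<in> Linf M \<Longrightarrow> g2 \<in> Linf M \<Longrightarrow> (AE x in M. g1 x = g2 x) \<Longrightarrow>
      (LINT x|M. u x * g1 x) = (LINT x|M. u x * g2 x)"
proof -
  fix g C assume "g \<in> Linf M" "AE x in M. \<bar>g x\<bar> \<le> C"
  then show "\<bar>LINT x|M. u x * g x\<bar> \<le> C * (LINT x|M. \<bar>u x\<bar>)"
    using integral_Linf_bound[OF u] by (auto simp: Linf_def)
next
  fix g1 g2 a b assume g: "g1 \<in> Linf M" "g2 \<in> Linf M"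
  have i1: "integrable M (\<lambda>x. a * (u x * g1 x))" and i2: "integrable M (\<lambda>x. b * (u x * g2 x))"
    using integrable_Linf_mult[OF u g(1)] integrable_Linf_mult[OF u g(2)] by auto
  have "(LINT x|M. u x * (a * g1 x + b * g2 x)) = (LINT x|M. a * (u x * g1 x) + b * (u x * g2 x))"
    by (simp add: algebra_simps)
  also have "\<dots> = (LINT x|M. a * (u x * g1 x)) + (LINT x|M. b * (u x * g2 x))"
    by (rule Bochner_Integration.integral_add[OF i1 i2])
  also have "\<dots> = a * (LINT x|M. u x * g1 x) + b * (LINT x|M. u x * g2 x)" by simp
  finally show "(LINT x|M. u x * (a * g1 x + b * g2 x)) = a * (LINT x|M. u x * g1 x) + b * (LINT x|M. u x * g2 x)" .
next
  fix g1 g2 assume g: "g1 \<in> Linf M" "g2 \<in> Linf M" and ae: "AE x in M. g1 x = g2 x"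
  show "(LINT x|M. u x * g1 x) = (LINT x|M. u x * g2 x)"
    using ae integrable_Linf_mult[OF u g(1)] integrable_Linf_mult[OF u g(2)]
    by (intro integral_cong_AE) (auto elim!: eventually_mono)
qed



theorem corollary3p10:
  fixes M :: "'a measure" and f :: "'a \<Rightarrow> real"
  assumes "finite_measure M"
    and "integrable M f"
    and "AE x in M. 0 \<le> f x"
  shows "relatively_compactin (weak_L1_topology M)
           {T f | T. semi_doubly_stochastic M T}"
proof -
  note fm = assms(1) and fi = assms(2) and fpos = assms(3)
  define Y where "Y = product_topology (\<lambda>_. euclideanreal) (Linf M)"
  define A where "A = {f::'a \<Rightarrow> real. integrable M f}"
  define P where "P = (\<lambda>f. restrict (\<lambda>g. LINT x|M. f x * g x) (Linf M))"
  define S where "S = {T f | T. semi_doubly_stochastic M T}"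
  define I where "I = (LINT x|M. f x)"
  define tl where "tl = (\<lambda>N. LINT y|M. f y * indicator {x\<in>space M. N < f x} y)"
  define Q1 where "Q1 = (\<lambda>\<phi>::('a \<Rightarrow> real) \<Rightarrow> real. \<forall>g C. g \<in> Linf M \<longrightarrow> (AE x in M. \<bar>g x\<bar> \<le> C) \<longrightarrow> \<bar>\<phi> g\<bar> \<le> C * I)"
  define Q2 where "Q2 = (\<lambda>\<phi>::('a \<Rightarrow> real) \<Rightarrow> real. \<forall>g1 g2 a b. g1 \<in> Linf M \<longrightarrow> g2 \<in> Linf M \<longrightarrow>
      \<phi> (\<lambda>y. a * g1 y + b * g2 y) = a * \<phi> g1 + b * \<phi> g2)"
  define Q3 where "Q3 = (\<lambda>\<phi>::('a \<Rightarrow> real) \<Rightarrow> real. \<forall>g1 g2. g1 \<in> Linf M \<longrightarrow> g2 \<in> Linf M \<longrightarrow>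
      (AE x in M. g1 x = g2 x) \<longrightarrow> \<phi> g1 = \<phi> g2)"
  define Q4 where "Q4 = (\<lambda>\<phi>::('a \<Rightarrow> real) \<Rightarrow> real. \<forall>E N. E \<in> sets M \<longrightarrow> 0 \<le> N \<longrightarrow>
      0 \<le> \<phi> (indicator E) \<and> \<phi> (indicator E) \<le> tl N + N * measure M E)"
  define \<Phi> where "\<Phi> = {\<phi> \<in> topspace Y. Q1 \<phi> \<and> Q2 \<phi> \<and> Q3 \<phi> \<and> Q4 \<phi>}"
  define Cg where "Cg = (\<lambda>g::'a \<Rightarrow> real. SOME C::real. AE x in M. \<bar>g x\<bar> \<le> C)"
  define K where "K = PiE (Linf M) (\<lambda>g. {- (Cg g * I) .. Cg g * I})"
  have tY: "topspace Y = PiE (Linf M) (\<lambda>_. UNIV)"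
    unfolding Y_def by (simp add: topspace_product_topology)
  have proj: "continuous_map Y euclideanreal (\<lambda>\<phi>. \<phi> g)" if "g \<in> Linf M" for g
    unfolding Y_def using that by (rule continuous_map_product_projection)
  have Cg: "AE x in M. \<bar>g x\<bar> \<le> Cg g" if "g \<in> Linf M" for g
  proof -
    from that obtain C where "AE x in M. \<bar>g x\<bar> \<le> C" by (auto simp: Linf_def)
    then show ?thesis unfolding Cg_def by (rule someI)
  qed
  have "relatively_compactin (pullback_topology A P Y) S"
  proof (rule relcompact_pullback[where K=K and \<Phi>=\<Phi>])
    show "compactin Y K"
      unfolding Y_def K_def by (simp add: compactin_PiE)
    show "\<Phi> \<subseteq> K"
    proof
      fix \<phi> assume "\<phi> \<in> \<Phi>"
      then have "\<phi> \<in> topspace Y" "Q1 \<phi>" unfolding \<Phi>_def by auto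
      then have ext: "\<phi> \<in> extensional (Linf M)" and q1: "Q1 \<phi>" unfolding tY by (auto simp: PiE_iff)
      have "\<phi> g \<in> {- (Cg g * I) .. Cg g * I}" if g: "g \<in> Linf M" for g
      proof -
        have "\<bar>\<phi> g\<bar> \<le> Cg g * I" using q1 Cg[OF g] g unfolding Q1_def by blast
        then show ?thesis unfolding atLeastAtMost_iff abs_le_iff by linarith
      qed
      then show "\<phi> \<in> K" unfolding K_def using ext by (auto simp: PiE_iff)
    qed
    show "closedin Y \<Phi>"
      unfolding \<Phi>_def
    proof (intro closedin_conj)
      show "closedin Y {x \<in> topspace Y. Q1 x}" unfolding Q1_def
        by (intro closedin_all' closedin_imp closedin_le) (auto intro!: continuous_intros proj)
      show "closedin Y {x \<in> topspace Y. Q2 x}" unfolding Q2_def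
        by (intro closedin_all' closedin_imp closedin_eq) (auto intro!: continuous_intros proj Linf_lin)
      show "closedin Y {x \<in> topspace Y. Q3 x}" unfolding Q3_def
        by (intro closedin_all' closedin_imp closedin_eq) (auto intro!: continuous_intros proj)
      show "closedin Y {x \<in> topspace Y. Q4 x}" unfolding Q4_def
        by (intro closedin_all' closedin_imp closedin_conj closedin_le)
          (auto intro!: continuous_intros proj Linf_indicator)
    qed
    show "P ` S \<subseteq> \<Phi>"
    proof
      fix \<phi> assume "\<phi> \<in> P ` S"
      then obtain T where T: "semi_doubly_stochastic M T" and \<phi>: "\<phi> = P (T f)"
        unfolding S_def by auto
      note props = sds_props[OF fm fi fpos T]
      define u where "u = T f"
      have ui: "integrable M u" using props unfolding u_def by auto
      have upos: "AE x in M. 0 \<le> u x" using props unfolding u_def by auto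
      have uabs: "(LINT x|M. \<bar>u x\<bar>) = I"
      proof -
        have "(LINT x|M. \<bar>u x\<bar>) = (LINT x|M. u x)"
          using upos ui by (intro integral_cong_AE) (auto elim!: eventually_mono)
        then show ?thesis using props unfolding u_def I_def by simp
      qed
      note pp = Pu_props[OF ui]
      have "Q1 \<phi>" unfolding Q1_def \<phi> P_def u_def[symmetric]
      proof (intro allI impI)
        fix g C assume g: "g \<in> Linf M" and C: "AE x in M. \<bar>g x\<bar> \<le> C"
        show "\<bar>restrict (\<lambda>g. LINT x|M. u x * g x) (Linf M) g\<bar> \<le> C * I"
          using pp(1)[OF g C] uabs g by simp
      qed
      moreover have "Q2 \<phi>" unfolding Q2_def \<phi> P_def u_def[symmetric]
      proof (intro allI impI)
        fix g1 g2 a b assume g: "g1 \<in> Linf M" "g2 \<in> Linf M"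
        show "restrict (\<lambda>g. LINT x|M. u x * g x) (Linf M) (\<lambda>y. a * g1 y + b * g2 y) =
          a * restrict (\<lambda>g. LINT x|M. u x * g x) (Linf M) g1 + b * restrict (\<lambda>g. LINT x|M. u x * g x) (Linf M) g2"
          using pp(2)[OF g, of a b] Linf_lin[OF g, of a b] g by simp
      qed
      moreover have "Q3 \<phi>" unfolding Q3_def \<phi> P_def u_def[symmetric]
      proof (intro allI impI)
        fix g1 g2 assume g: "g1 \<in> Linf M" "g2 \<in> Linf M" and ae: "AE x in M. g1 x = g2 x"
        show "restrict (\<lambda>g. LINT x|M. u x * g x) (Linf M) g1 = restrict (\<lambda>g. LINT x|M. u x * g x) (Linf M) g2"
          using pp(3)[OF g ae] g by simp
      qed
      moreover have "Q4 \<phi>" unfolding Q4_def \<phi> P_def u_def[symmetric]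
      proof (intro allI impI conjI)
        fix E N assume E: "E \<in> sets M" and N: "0 \<le> (N::real)"
        have "0 \<le> (LINT x|M. u x * indicator E x)"
          using upos by (intro integral_nonneg_AE) (auto elim!: eventually_mono simp: indicator_def)
        then show "0 \<le> restrict (\<lambda>g. LINT x|M. u x * g x) (Linf M) (indicator E)"
          using Linf_indicator[OF E] by simp
        show "restrict (\<lambda>g. LINT x|M. u x * g x) (Linf M) (indicator E) \<le> tl N + N * measure M E"
          using Linf_indicator[OF E] props(4)[OF E N] unfolding u_def tl_def by simp
      qed
      moreover have "\<phi> \<in> topspace Y" unfolding \<phi> P_def tY by auto
      ultimately show "\<phi> \<in> \<Phi>" unfolding \<Phi>_def by auto
    qed
    show "\<Phi> \<subseteq> P ` A"
    proof
      fix \<phi> assume "\<phi> \<in> \<Phi>"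
      then have \<phi>Y: "\<phi> \<in> topspace Y" and q1: "Q1 \<phi>" and q2: "Q2 \<phi>" and q3: "Q3 \<phi>" and q4: "Q4 \<phi>"
        unfolding \<Phi>_def by auto
      have zero: "\<phi> (\<lambda>_. 0) = 0"
      proof -
        have "\<phi> (\<lambda>y. 0 * (\<lambda>_. 0::real) y + 0 * (\<lambda>_. 0::real) y) = 0 * \<phi> (\<lambda>_. 0) + 0 * \<phi> (\<lambda>_. 0)"
          using q2 Linf_zero[of M] unfolding Q2_def by blast
        then show ?thesis by simp
      qed
      have "\<exists>u. integrable M u \<and> (\<forall>E\<in>sets M. \<phi> (indicator E) = (LINT x|M. u x * indicator E x))"
      proof (rule construct[OF fm fi])
        show "\<And>E N. E \<in> sets M \<Longrightarrow> 0 \<le> N \<Longrightarrow> 0 \<le> \<phi> (indicator E) \<and>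
          \<phi> (indicator E) \<le> (LINT y|M. f y * indicator {x\<in>space M. N < f x} y) + N * measure M E"
          using q4 unfolding Q4_def tl_def by blast
        fix A B assume AB: "A \<in> sets M" "B \<in> sets M" "A \<inter> B = {}"
        have "indicator (A \<union> B) = (\<lambda>y. 1 * indicator A y + 1 * indicator B y :: real)"
          using AB(3) by (auto simp: fun_eq_iff indicator_def)
        moreover have "\<phi> (\<lambda>y. 1 * indicator A y + 1 * indicator B y) = 1 * \<phi> (indicator A) + 1 * \<phi> (indicator B)"
          using q2 Linf_indicator[OF AB(1)] Linf_indicator[OF AB(2)] unfolding Q2_def by blast
        ultimately show "\<phi> (indicator (A \<union> B)) = \<phi> (indicator A) + \<phi> (indicator B)"
          by simp
      next
        fix E assume E: "E \<in> null_sets M"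
        have "\<phi> (indicator E) = \<phi> (\<lambda>_. 0)"
        proof -
          have "AE x in M. indicator E x = (0::real)"
            using AE_not_in[OF E] by (auto elim!: eventually_mono simp: indicator_def)
          then show ?thesis using q3 Linf_zero Linf_indicator[of E M] E unfolding Q3_def by auto
        qed
        then show "\<phi> (indicator E) = 0" using zero by simp
      qed
      then obtain u where ui: "integrable M u"
        and uE: "\<And>E. E \<in> sets M \<Longrightarrow> \<phi> (indicator E) = (LINT x|M. u x * indicator E x)" by auto
      note pp = Pu_props[OF ui]
      interpret lfun M "\<lambda>g. \<phi> g - (LINT x|M. u x * g x)" "I + (LINT x|M. \<bar>u x\<bar>)"
      proof
        fix g C assume g: "g \<in> Linf M" and C: "AE x in M. \<bar>g x\<bar> \<le> C"
        have "\<bar>\<phi> g\<bar> \<le> C * I" using q1 g C unfolding Q1_def by auto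
        moreover have "\<bar>LINT x|M. u x * g x\<bar> \<le> C * (LINT x|M. \<bar>u x\<bar>)" using pp(1)[OF g C] .
        ultimately show "\<bar>\<phi> g - (LINT x|M. u x * g x)\<bar> \<le> C * (I + (LINT x|M. \<bar>u x\<bar>))"
          using abs_triangle_ineq4[of "\<phi> g" "LINT x|M. u x * g x"] unfolding distrib_left by linarith
      next
        fix g1 g2 a b assume g: "g1 \<in> Linf M" "g2 \<in> Linf M"
        show "\<phi> (\<lambda>y. a * g1 y + b * g2 y) - (LINT x|M. u x * (a * g1 x + b * g2 x)) =
          a * (\<phi> g1 - (LINT x|M. u x * g1 x)) + b * (\<phi> g2 - (LINT x|M. u x * g2 x))"
        proof -
          have "\<phi> (\<lambda>y. a * g1 y + b * g2 y) = a * \<phi> g1 + b * \<phi> g2" using q2 g unfolding Q2_def by blast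
          then show ?thesis using pp(2)[OF g, of a b] by (simp add: algebra_simps)
        qed
      next
        fix g1 g2 assume g: "g1 \<in> Linf M" "g2 \<in> Linf M" and ae: "AE x in M. g1 x = g2 x"
        show "\<phi> g1 - (LINT x|M. u x * g1 x) = \<phi> g2 - (LINT x|M. u x * g2 x)"
        proof -
          have "\<phi> g1 = \<phi> g2" using q3 g ae unfolding Q3_def by blast
          then show ?thesis using pp(3)[OF g ae] by simp
        qed
      next
        fix E assume "E \<in> sets M"
        then show "\<phi> (indicator E) - (LINT x|M. u x * indicator E x) = 0" using uE by simp
      qed
      have "\<phi> = P u"
      proof (rule extensionalityI)
        show "\<phi> \<in> extensional (Linf M)" using \<phi>Y unfolding tY by (simp add: PiE_iff)
        show "P u \<in> extensional (Linf M)" unfolding P_def by simp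
        fix g assume g: "g \<in> Linf M"
        show "\<phi> g = P u g" using vanish[OF g] g unfolding P_def by simp
      qed
      then show "\<phi> \<in> P ` A" using ui unfolding A_def by auto
    qed
    show "S \<subseteq> A" unfolding S_def A_def using sds_props[OF fm fi fpos] by auto
    show "P ` A \<subseteq> topspace Y" unfolding P_def tY by auto
  qed
  then show ?thesis unfolding weak_L1_topology_def S_def A_def P_def Y_def .
qed


end
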